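(* Let $G$ be a simple graph on $n$ vertices and let $k$ be an integer with $2 \le k \le n-2$. Then the $k$-token graph $F_k(G)$ is regular if and only if one of the following holds: (1) $G$ is isomorphic to the complete graph $K_n$; (2) $G$ is isomorphic to the empty graph $\overline{K_n}$ (the graph on $n$ vertices with no edges); (3) $G$ is isomorphic to the complete bipartite graph (star) $K_{1,n-1}$ and $k=n/2$; (4) $G$ is isomorphic to the complement $\overline{K_{1,n-1}}$ of the star and $k=n/2$.
   Context: For a simple graph $G=(V,E)$ on $n$ vertices and an integer $1\le k<n$, the $k$-token graph $F_k(G)$ is the graph whose vertices are all $k$-element subsets of $V$, two such subsets $A,B$ being adjacent whenever their symmetric difference $A\triangle B$ is a pair $\{a,b\}$ with $a$ adjacent to $b$ in $G$. *)

theory Defs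
  imports Main
begin

definition simple_graph :: "'a set \<Rightarrow> ('a \<Rightarrow> 'a \<Rightarrow> bool) \<Rightarrow> bool" where
  "simple_graph V E \<longleftrightarrow> finite V \<and> (\<forall>x y. E x y \<longrightarrow> x \<in> V \<and> y \<in> V)
     \<and> (\<forall>x y. E x y \<longrightarrow> E y x) \<and> (\<forall>x. \<not> E x x)"

definition token_vertices :: "'a set \<Rightarrow> nat \<Rightarrow> 'a set set" where
  "token_vertices V k = {A. A \<subseteq> V \<and> card A = k}"

definition token_adj :: "('a \<Rightarrow> 'a \<Rightarrow> bool) \<Rightarrow> 'a set \<Rightarrow> 'a set \<Rightarrow> bool" where
  "token_adj E A B \<longleftrightarrow> (\<exists>a b. (A - B) \<union> (B - A) = {a, b} \<and> E a b)"

definition degree :: "'b set \<Rightarrow> ('b \<Rightarrow> 'b \<Rightarrow> bool) \<Rightarrow> 'b \<Rightarrow> nat" where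
  "degree V E v = card {w \<in> V. E v w}"

definition regular :: "'b set \<Rightarrow> ('b \<Rightarrow> 'b \<Rightarrow> bool) \<Rightarrow> bool" where
  "regular V E \<longleftrightarrow> (\<exists>d. \<forall>v \<in> V. degree V E v = d)"

definition graph_iso :: "'a set \<Rightarrow> ('a \<Rightarrow> 'a \<Rightarrow> bool) \<Rightarrow> 'b set \<Rightarrow> ('b \<Rightarrow> 'b \<Rightarrow> bool) \<Rightarrow> bool" where
  "graph_iso V E W F \<longleftrightarrow> (\<exists>f. bij_betw f V W \<and> (\<forall>x\<in>V. \<forall>y\<in>V. E x y \<longleftrightarrow> F (f x) (f y)))"

definition complete_adj :: "nat \<Rightarrow> nat \<Rightarrow> bool" where
  "complete_adj x y \<longleftrightarrow> x \<noteq> y"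

definition empty_adj :: "nat \<Rightarrow> nat \<Rightarrow> bool" where
  "empty_adj x y \<longleftrightarrow> False"

definition star_adj :: "nat \<Rightarrow> nat \<Rightarrow> bool" where
  "star_adj x y \<longleftrightarrow> x \<noteq> y \<and> (x = 0 \<or> y = 0)"

definition costar_adj :: "nat \<Rightarrow> nat \<Rightarrow> bool" where
  "costar_adj x y \<longleftrightarrow> x \<noteq> y \<and> \<not> star_adj x y"

end

theory Submission
  imports Defs "HOL-Combinatorics.Transposition"
begin

definition ei :: "('a \<Rightarrow> 'a \<Rightarrow> bool) \<Rightarrow> 'a \<Rightarrow> 'a \<Rightarrow> int" where
  "ei E a b = (if E a b then 1 else 0)"

definition cutv :: "'a set \<Rightarrow> ('a \<Rightarrow> 'a \<Rightarrow> bool) \<Rightarrow> 'a set \<Rightarrow> int" where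
  "cutv V E A = (\<Sum>a\<in>A. \<Sum>b\<in>V-A. ei E a b)"

lemma two_split:
  assumes U: "X \<union> Y = {a,b}" and D: "X \<inter> Y = {}" and C: "card X = card Y" and ab: "a \<noteq> b"
  shows "(X = {a} \<and> Y = {b}) \<or> (X = {b} \<and> Y = {a})"
proof -
  have Y: "Y = {a,b} - X" using U D by blast
  have "X \<subseteq> {a,b}" using U by blast
  then have "X = {} \<or> X = {a} \<or> X = {b} \<or> X = {a,b}" by blast
  then show ?thesis
  proof (elim disjE)
    assume "X = {}" then show ?thesis using Y C ab by simp
  next
    assume "X = {a,b}" then show ?thesis using Y C ab by simp
  next
    assume "X = {a}" then show ?thesis using Y ab by auto
  next
    assume "X = {b}" then show ?thesis using Y ab by auto
  qed
qed

lemma nbr_set: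
  assumes sg: "simple_graph V E" and AV: "A \<subseteq> V" and cA: "card A = k"
  shows "{B \<in> token_vertices V k. token_adj E A B}
       = (\<lambda>(a,b). insert b (A - {a})) ` (SIGMA a:A. {b\<in>V-A. E a b})"
proof
  have fV: "finite V" using sg by (simp add: simple_graph_def)
  have fA: "finite A" using fV AV finite_subset by blast
  show "(\<lambda>(a,b). insert b (A - {a})) ` (SIGMA a:A. {b\<in>V-A. E a b}) \<subseteq> {B \<in> token_vertices V k. token_adj E A B}"
  proof
    fix B assume "B \<in> (\<lambda>(a,b). insert b (A - {a})) ` (SIGMA a:A. {b\<in>V-A. E a b})"
    then obtain a b where ab: "a \<in> A" "b \<in> V" "b \<notin> A" "E a b" and B: "B = insert b (A - {a})" by auto
    have "card B = k" using B ab fA cA by (simp add: card_Diff_singleton)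
       (metis One_nat_def Suc_pred card_gt_0_iff empty_iff)
    moreover have "B \<subseteq> V" using B ab AV by auto
    moreover have "(A - B) \<union> (B - A) = {a, b}" using B ab by auto
    moreover have "token_adj E A B" unfolding token_adj_def
      using \<open>(A - B) \<union> (B - A) = {a, b}\<close> ab(4) by blast
    ultimately show "B \<in> {B \<in> token_vertices V k. token_adj E A B}"
      by (simp add: token_vertices_def)
  qed
  show "{B \<in> token_vertices V k. token_adj E A B} \<subseteq> (\<lambda>(a,b). insert b (A - {a})) ` (SIGMA a:A. {b\<in>V-A. E a b})"
  proof
    fix B assume "B \<in> {B \<in> token_vertices V k. token_adj E A B}"
    then have BV: "B \<subseteq> V" and cB: "card B = k" and "token_adj E A B"
      by (auto simp: token_vertices_def)
    then obtain a b where U: "(A - B) \<union> (B - A) = {a, b}" and Eab: "E a b"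
      by (auto simp: token_adj_def)
    have ne: "a \<noteq> b" using Eab sg by (auto simp: simple_graph_def)
    have fB: "finite B" using fV BV finite_subset by blast
    have cc: "card (A - B) = card (B - A)"
    proof -
      have "card (A - B) = card A - card (A \<inter> B)" using fA by (simp add: card_Diff_subset_Int)
      moreover have "card (B - A) = card B - card (B \<inter> A)" using fB by (simp add: card_Diff_subset_Int)
      ultimately show ?thesis using cA cB by (simp add: Int_commute)
    qed
    have cases: "(A - B = {a} \<and> B - A = {b}) \<or> (A - B = {b} \<and> B - A = {a})"
      by (rule two_split[OF U _ cc ne]) blast
    have Eba: "E b a" using Eab sg by (auto simp: simple_graph_def)
    show "B \<in> (\<lambda>(a,b). insert b (A - {a})) ` (SIGMA a:A. {b\<in>V-A. E a b})"
      using cases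
    proof
      assume h: "A - B = {a} \<and> B - A = {b}"
      then have "B = insert b (A - {a})" by blast
      moreover have "(a, b) \<in> (SIGMA a:A. {b\<in>V-A. E a b})" using h Eab BV by auto
      ultimately show ?thesis by force
    next
      assume h: "A - B = {b} \<and> B - A = {a}"
      then have "B = insert a (A - {b})" by blast
      moreover have "(b, a) \<in> (SIGMA a:A. {b\<in>V-A. E a b})" using h Eba BV by auto
      ultimately show ?thesis by force
    qed
  qed
qed

lemma nbr_inj:
  "inj_on (\<lambda>(a,b). insert b (A - {a})) (SIGMA a:A. {b\<in>V-A. E a b})"
proof (rule inj_onI, clarsimp)
  fix x y xa ya
  assume h: "x \<in> A" "xa \<in> A" "y \<notin> A" "ya \<notin> A" "insert y (A - {x}) = insert ya (A - {xa})"
  have "y = ya" using h by blast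
  moreover have "x = xa"
  proof (rule ccontr)
    assume "x \<noteq> xa"
    then have "xa \<in> insert y (A - {x})" using h by blast
    then have "xa \<in> insert ya (A - {xa})" using h by simp
    then show False using h by blast
  qed
  ultimately show "x = xa \<and> y = ya" by simp
qed

lemma degree_cut:
  assumes sg: "simple_graph V E" and AV: "A \<subseteq> V" and cA: "card A = k"
  shows "int (degree (token_vertices V k) (token_adj E) A) = cutv V E A"
proof -
  have fV: "finite V" using sg by (simp add: simple_graph_def)
  have fA: "finite A" using fV AV finite_subset by blast
  have "degree (token_vertices V k) (token_adj E) A = card (SIGMA a:A. {b\<in>V-A. E a b})"
    unfolding degree_def nbr_set[OF assms] using card_image[OF nbr_inj] by simp
  also have "\<dots> = (\<Sum>a\<in>A. card {b\<in>V-A. E a b})" using fA fV by simp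
  finally have "int (degree (token_vertices V k) (token_adj E) A) = (\<Sum>a\<in>A. int (card {b\<in>V-A. E a b}))"
    by simp
  also have "\<dots> = cutv V E A" unfolding cutv_def
  proof (rule sum.cong)
    fix a assume "a \<in> A"
    have "(\<Sum>b\<in>{b\<in>V-A. E a b}. (1::int)) = (\<Sum>b\<in>V-A. ei E a b)"
      by (rule trans[OF sum.inter_filter]) (simp_all add: fV ei_def)
    moreover have "int (card {b\<in>V-A. E a b}) = (\<Sum>b\<in>{b\<in>V-A. E a b}. (1::int))" by simp
    ultimately show "int (card {b\<in>V-A. E a b}) = (\<Sum>b\<in>V-A. ei E a b)" by metis
  qed simp
  finally show ?thesis .
qed


lemma swap_cut:
  assumes fV: "finite V" and xV: "x \<in> V" and yV: "y \<in> V" and xy: "x \<noteq> y"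
    and CD: "C \<inter> D = {}" and CDU: "C \<union> D = V - {x,y}"
    and sym: "\<And>a b. E a b \<Longrightarrow> E b a"
  shows "cutv V E (insert x C) - cutv V E (insert y C)
       = (\<Sum>b\<in>D. ei E x b - ei E y b) - (\<Sum>a\<in>C. ei E x a - ei E y a)"
proof -
  have fC: "finite C" using fV CDU by (metis finite_Diff finite_Un)
  have fD: "finite D" using fV CDU by (metis finite_Diff finite_Un)
  have nin: "x \<notin> C" "y \<notin> C" "x \<notin> D" "y \<notin> D" using CDU by auto
  have V1: "V - insert x C = insert y D" using CDU CD xV yV xy by blast
  have V2: "V - insert y C = insert x D" using CDU CD xV yV xy by blast
  have es: "\<And>a b. ei E a b = ei E b a" using sym unfolding ei_def by metis
  have s1: "cutv V E (insert x C) = ei E x y + (\<Sum>b\<in>D. ei E x b) + (\<Sum>a\<in>C. ei E a y)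
      + (\<Sum>a\<in>C. \<Sum>b\<in>D. ei E a b)"
    unfolding cutv_def V1 using fC fD nin by (simp add: sum.distrib algebra_simps)
  have s2: "cutv V E (insert y C) = ei E y x + (\<Sum>b\<in>D. ei E y b) + (\<Sum>a\<in>C. ei E a x)
      + (\<Sum>a\<in>C. \<Sum>b\<in>D. ei E a b)"
    unfolding cutv_def V2 using fC fD nin by (simp add: sum.distrib algebra_simps)
  have t1: "(\<Sum>a\<in>C. ei E a y) = (\<Sum>a\<in>C. ei E y a)" using es by simp
  have t2: "(\<Sum>a\<in>C. ei E a x) = (\<Sum>a\<in>C. ei E x a)" using es by simp
  have t3: "ei E x y = ei E y x" using es by simp
  show ?thesis using s1 s2 t1 t2 t3 by (simp add: sum_subtractf)
qed

lemma balance: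
  assumes sg: "simple_graph V E" and const: "\<And>A. A \<subseteq> V \<Longrightarrow> card A = k \<Longrightarrow> cutv V E A = d"
    and xV: "x \<in> V" and yV: "y \<in> V" and xy: "x \<noteq> y" and k1: "1 \<le> k"
    and CW: "C \<subseteq> V - {x,y}" and cC: "card C = k - 1"
  shows "(\<Sum>b\<in>(V-{x,y})-C. ei E x b - ei E y b) = (\<Sum>a\<in>C. ei E x a - ei E y a)"
proof -
  have fV: "finite V" using sg by (simp add: simple_graph_def)
  have sym: "\<And>a b. E a b \<Longrightarrow> E b a" using sg by (simp add: simple_graph_def)
  have fC: "finite C" using fV CW finite_subset by blast
  have "x \<notin> C" "y \<notin> C" using CW by auto
  then have "card (insert x C) = k" "card (insert y C) = k" using fC cC k1 by auto
  moreover have "insert x C \<subseteq> V" "insert y C \<subseteq> V" using CW xV yV by auto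
  ultimately have "cutv V E (insert x C) - cutv V E (insert y C) = 0" using const by simp
  moreover have "cutv V E (insert x C) - cutv V E (insert y C)
       = (\<Sum>b\<in>(V-{x,y})-C. ei E x b - ei E y b) - (\<Sum>a\<in>C. ei E x a - ei E y a)"
    by (rule swap_cut[OF fV xV yV xy _ _ sym]) (use CW in auto)
  ultimately show ?thesis by simp
qed

lemma H1:
  assumes sg: "simple_graph V E" and const: "\<And>A. A \<subseteq> V \<Longrightarrow> card A = k \<Longrightarrow> cutv V E A = d"
    and cV: "card V = n" and k2: "2 \<le> k" and kn: "k + 2 \<le> n"
    and V: "x \<in> V" "y \<in> V" "u \<in> V" "w \<in> V"
    and dist: "x \<noteq> y" "x \<noteq> u" "x \<noteq> w" "y \<noteq> u" "y \<noteq> w" "u \<noteq> w"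
  shows "ei E x u - ei E y u = ei E x w - ei E y w"
proof -
  have fV: "finite V" using sg by (simp add: simple_graph_def)
  define W where "W = V - {x,y}"
  define f where "f b = ei E x b - ei E y b" for b
  have cW: "card (W - {u,w}) = n - 4" unfolding W_def using fV V dist cV
    by (simp add: card_Diff_subset)
  have le: "k - 2 \<le> card (W - {u,w})" using cW kn by simp
  obtain C0 where C0: "C0 \<subseteq> W - {u,w}" "card C0 = k - 2" "finite C0"
    using obtain_subset_with_card_n[OF le] by blast
  define R where "R = W - {u,w} - C0"
  have fR: "finite R" unfolding R_def W_def using fV by simp
  have uW: "u \<in> W" "w \<in> W" unfolding W_def using V dist by auto
  have nC: "u \<notin> C0" "w \<notin> C0" using C0 by auto
  have ci: "card (insert u C0) = k - 1" "card (insert w C0) = k - 1" using C0 nC k2 by auto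
  have b1: "(\<Sum>b\<in>W - insert u C0. f b) = (\<Sum>a\<in>insert u C0. f a)"
    unfolding W_def f_def
    by (rule balance[OF sg const V(1,2) dist(1)]) (use k2 C0 uW ci in \<open>auto simp: W_def\<close>)
  have b2: "(\<Sum>b\<in>W - insert w C0. f b) = (\<Sum>a\<in>insert w C0. f a)"
    unfolding W_def f_def
    by (rule balance[OF sg const V(1,2) dist(1)]) (use k2 C0 uW ci in \<open>auto simp: W_def\<close>)
  have e1: "W - insert u C0 = insert w R" using C0 uW dist unfolding R_def by blast
  have e2: "W - insert w C0 = insert u R" using C0 uW dist unfolding R_def by blast
  have nR: "u \<notin> R" "w \<notin> R" unfolding R_def by auto
  have "f w + sum f R = f u + sum f C0" using b1 e1 fR nR nC C0 by simp
  moreover have "f u + sum f R = f w + sum f C0" using b2 e2 fR nR nC C0 by simp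
  ultimately have "f u = f w" by simp
  then show ?thesis unfolding f_def .
qed

lemma H2:
  assumes sg: "simple_graph V E" and const: "\<And>A. A \<subseteq> V \<Longrightarrow> card A = k \<Longrightarrow> cutv V E A = d"
    and cV: "card V = n" and k2: "2 \<le> k" and kn: "k + 2 \<le> n" and nk: "2 * k \<noteq> n"
    and V: "x \<in> V" "y \<in> V" "u \<in> V"
    and dist: "x \<noteq> y" "x \<noteq> u" "y \<noteq> u"
  shows "ei E x u = ei E y u"
proof -
  have fV: "finite V" using sg by (simp add: simple_graph_def)
  define W where "W = V - {x,y}"
  define f where "f b = ei E x b - ei E y b" for b
  have cW: "card W = n - 2" unfolding W_def using fV V dist cV
    by (simp add: card_Diff_subset)
  have le: "k - 1 \<le> card W" using cW kn by simp
  obtain C where C: "C \<subseteq> W" "card C = k - 1" "finite C"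
    using obtain_subset_with_card_n[OF le] by blast
  have fW: "finite W" unfolding W_def using fV by simp
  have uW: "u \<in> W" unfolding W_def using V dist by auto
  have fc: "\<And>b. b \<in> W \<Longrightarrow> f b = f u"
  proof -
    fix b assume "b \<in> W"
    show "f b = f u"
    proof (cases "b = u")
      case False
      then show ?thesis using H1[where V=V and E=E and k=k and d=d, OF sg const cV k2 kn, of x y b u] V dist \<open>b \<in> W\<close>
        unfolding W_def f_def by blast
    qed simp
  qed
  have b: "(\<Sum>b\<in>W - C. f b) = (\<Sum>a\<in>C. f a)"
    unfolding W_def f_def
    by (rule balance[OF sg const V(1,2) dist(1)]) (use k2 C in \<open>auto simp: W_def\<close>)
  have cD: "card (W - C) = n - 2 - (k - 1)" using C cW fW by (simp add: card_Diff_subset)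
  have "(\<Sum>b\<in>W - C. f b) = (\<Sum>b\<in>W - C. f u)" by (rule sum.cong) (use fc in auto)
  then have s1: "(\<Sum>b\<in>W - C. f b) = of_nat (n - 2 - (k - 1)) * f u"
    using cD by simp
  have "(\<Sum>a\<in>C. f a) = (\<Sum>a\<in>C. f u)" by (rule sum.cong) (use fc C in auto)
  then have s2: "(\<Sum>a\<in>C. f a) = of_nat (k - 1) * f u" using C by simp
  from s1 s2 have eq: "of_nat (n - 2 - (k - 1)) * f u = of_nat (k - 1) * f u" using b by linarith
  have "int (n - 2 - (k - 1)) \<noteq> int (k - 1)" using nk kn k2 by simp
  then have "f u = 0" using eq by simp
  then show ?thesis unfolding f_def by simp
qed


lemma regular_iff:
  assumes sg: "simple_graph V E"
  shows "regular (token_vertices V k) (token_adj E) \<longleftrightarrow>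
    (\<exists>d. \<forall>A. A \<subseteq> V \<longrightarrow> card A = k \<longrightarrow> cutv V E A = d)"
proof
  assume "regular (token_vertices V k) (token_adj E)"
  then obtain d where d: "\<forall>A \<in> token_vertices V k. degree (token_vertices V k) (token_adj E) A = d"
    unfolding regular_def by blast
  have "\<forall>A. A \<subseteq> V \<longrightarrow> card A = k \<longrightarrow> cutv V E A = int d"
    using d degree_cut[OF sg] by (auto simp: token_vertices_def)
  then show "\<exists>d. \<forall>A. A \<subseteq> V \<longrightarrow> card A = k \<longrightarrow> cutv V E A = d" by blast
next
  assume "\<exists>d. \<forall>A. A \<subseteq> V \<longrightarrow> card A = k \<longrightarrow> cutv V E A = d"
  then obtain d where d: "\<forall>A. A \<subseteq> V \<longrightarrow> card A = k \<longrightarrow> cutv V E A = d" by blast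
  have "\<forall>A \<in> token_vertices V k. degree (token_vertices V k) (token_adj E) A = nat d"
  proof
    fix A assume "A \<in> token_vertices V k"
    then have A: "A \<subseteq> V" "card A = k" by (auto simp: token_vertices_def)
    have "int (degree (token_vertices V k) (token_adj E) A) = d" using degree_cut[OF sg A] d A by simp
    then show "degree (token_vertices V k) (token_adj E) A = nat d" by simp
  qed
  then show "regular (token_vertices V k) (token_adj E)" unfolding regular_def by blast
qed

lemma compl_or_empty:
  assumes sg: "simple_graph V E"
    and NA: "\<And>x y u. x \<in> V \<Longrightarrow> y \<in> V \<Longrightarrow> u \<in> V \<Longrightarrow> x \<noteq> y \<Longrightarrow> x \<noteq> u \<Longrightarrow> y \<noteq> u \<Longrightarrow> E x u = E y u"
  shows "(\<forall>x\<in>V. \<forall>y\<in>V. E x y \<longleftrightarrow> x \<noteq> y) \<or> (\<forall>x y. \<not> E x y)"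
proof (cases "\<forall>x y. \<not> E x y")
  case False
  then obtain a b where ab: "E a b" by blast
  have inV: "\<And>p q. E p q \<Longrightarrow> p \<in> V \<and> q \<in> V" using sg by (simp add: simple_graph_def)
  have sym: "\<And>p q. E p q \<Longrightarrow> E q p" using sg by (simp add: simple_graph_def)
  have irr: "\<And>p. \<not> E p p" using sg by (simp add: simple_graph_def)
  have full: "\<And>p q w. E p q \<Longrightarrow> w \<in> V \<Longrightarrow> w \<noteq> q \<Longrightarrow> E w q"
  proof -
    fix p q w assume h: "E p q" "w \<in> V" "w \<noteq> q"
    show "E w q"
    proof (cases "w = p")
      case True then show ?thesis using h by simp
    next
      case False
      have "p \<noteq> q" using h irr by metis
      then show ?thesis using NA[of p w q] h inV False by metis
    qed
  qed
  have "\<forall>x\<in>V. \<forall>y\<in>V. E x y \<longleftrightarrow> x \<noteq> y"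
  proof (intro ballI iffI)
    fix x y assume "x \<in> V" "y \<in> V" "E x y" then show "x \<noteq> y" using irr by metis
  next
    fix x y assume xy: "x \<in> V" "y \<in> V" "x \<noteq> y"
    show "E x y"
    proof (cases "y = b")
      case True then show ?thesis using full[OF ab] xy by simp
    next
      case False
      then have "E y b" using full[OF ab] xy by simp
      then have "E b y" by (rule sym)
      then show ?thesis using full xy by metis
    qed
  qed
  then show ?thesis by blast
qed simp

lemma star_or_costar:
  assumes sg: "simple_graph V E"
    and HH: "\<And>x y u w. x \<in> V \<Longrightarrow> y \<in> V \<Longrightarrow> u \<in> V \<Longrightarrow> w \<in> V \<Longrightarrow> x \<noteq> y \<Longrightarrow> x \<noteq> u \<Longrightarrow> x \<noteq> w
       \<Longrightarrow> y \<noteq> u \<Longrightarrow> y \<noteq> w \<Longrightarrow> u \<noteq> w \<Longrightarrow> ei E x u - ei E y u = ei E x w - ei E y w"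
    and V: "x \<in> V" "y \<in> V" "u \<in> V" and dist: "x \<noteq> y" "x \<noteq> u" "y \<noteq> u"
    and Exu: "E x u" and Eyu: "\<not> E y u"
  shows "(\<forall>a\<in>V. \<forall>b\<in>V. E a b \<longleftrightarrow> a \<noteq> b \<and> (a = x \<or> b = x))
       \<or> (\<forall>a\<in>V. \<forall>b\<in>V. E a b \<longleftrightarrow> a \<noteq> b \<and> a \<noteq> y \<and> b \<noteq> y)"
proof -
  have sym: "\<And>p q. E p q \<Longrightarrow> E q p" using sg by (simp add: simple_graph_def)
  have irr: "\<And>p. \<not> E p p" using sg by (simp add: simple_graph_def)
  have A: "\<And>w. w \<in> V \<Longrightarrow> w \<noteq> x \<Longrightarrow> w \<noteq> y \<Longrightarrow> E x w \<and> \<not> E y w"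
  proof -
    fix w assume w: "w \<in> V" "w \<noteq> x" "w \<noteq> y"
    show "E x w \<and> \<not> E y w"
    proof (cases "w = u")
      case True then show ?thesis using Exu Eyu by simp
    next
      case False
      have "ei E x u - ei E y u = ei E x w - ei E y w" using HH[of x y u w] V w dist False by metis
      then show ?thesis using Exu Eyu by (auto simp: ei_def split: if_splits)
    qed
  qed
  show ?thesis
  proof (cases "E x y")
    case True
    have W: "\<And>a b. a \<in> V \<Longrightarrow> b \<in> V \<Longrightarrow> a \<noteq> b \<Longrightarrow> a \<noteq> x \<Longrightarrow> a \<noteq> y \<Longrightarrow> b \<noteq> x \<Longrightarrow> b \<noteq> y \<Longrightarrow> \<not> E a b"
    proof -
      fix a b assume h: "a \<in> V" "b \<in> V" "a \<noteq> b" "a \<noteq> x" "a \<noteq> y" "b \<noteq> x" "b \<noteq> y"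
      have "ei E a x - ei E y x = ei E a b - ei E y b" using HH[of a y x b] h V dist by metis
      moreover have "E a x" using A[of a] h sym by blast
      moreover have "E y x" using True sym by blast
      moreover have "\<not> E y b" using A[of b] h by blast
      ultimately show "\<not> E a b" by (auto simp: ei_def split: if_splits)
    qed
    have "\<forall>a\<in>V. \<forall>b\<in>V. E a b \<longleftrightarrow> a \<noteq> b \<and> (a = x \<or> b = x)"
    proof (intro ballI)
      fix a b assume ab: "a \<in> V" "b \<in> V"
      show "E a b \<longleftrightarrow> a \<noteq> b \<and> (a = x \<or> b = x)"
        using W[OF ab] A[OF ab(1)] A[OF ab(2)] True sym irr dist by metis
    qed
    then show ?thesis by blast
  next
    case False
    have W: "\<And>a b. a \<in> V \<Longrightarrow> b \<in> V \<Longrightarrow> a \<noteq> b \<Longrightarrow> a \<noteq> x \<Longrightarrow> a \<noteq> y \<Longrightarrow> b \<noteq> x \<Longrightarrow> b \<noteq> y \<Longrightarrow> E a b"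
    proof -
      fix a b assume h: "a \<in> V" "b \<in> V" "a \<noteq> b" "a \<noteq> x" "a \<noteq> y" "b \<noteq> x" "b \<noteq> y"
      have "ei E a x - ei E y x = ei E a b - ei E y b" using HH[of a y x b] h V dist by metis
      moreover have "E a x" using A[of a] h sym by blast
      moreover have "\<not> E y x" using False sym by blast
      moreover have "\<not> E y b" using A[of b] h by blast
      ultimately show "E a b" by (auto simp: ei_def split: if_splits)
    qed
    have "\<forall>a\<in>V. \<forall>b\<in>V. E a b \<longleftrightarrow> a \<noteq> b \<and> a \<noteq> y \<and> b \<noteq> y"
    proof (intro ballI)
      fix a b assume ab: "a \<in> V" "b \<in> V"
      show "E a b \<longleftrightarrow> a \<noteq> b \<and> a \<noteq> y \<and> b \<noteq> y"
        using W[OF ab] A[OF ab(1)] A[OF ab(2)] False sym irr dist by metis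
    qed
    then show ?thesis by blast
  qed
qed


lemma cut_complete:
  assumes fV: "finite V" and AV: "A \<subseteq> V" and ch: "\<forall>x\<in>V. \<forall>y\<in>V. E x y \<longleftrightarrow> x \<noteq> y"
  shows "cutv V E A = int (card A) * int (card (V - A))"
proof -
  have "cutv V E A = (\<Sum>a\<in>A. \<Sum>b\<in>V-A. (1::int))"
    unfolding cutv_def
    by (rule sum.cong[OF refl], rule sum.cong[OF refl]) (use ch AV in \<open>auto simp: ei_def\<close>)
  then show ?thesis by simp
qed

lemma cut_empty:
  assumes ch: "\<forall>x y. \<not> E x y"
  shows "cutv V E A = 0"
  unfolding cutv_def ei_def using ch by simp

lemma cut_star:
  assumes fV: "finite V" and AV: "A \<subseteq> V" and cV: "c \<in> V"
    and ch: "\<forall>x\<in>V. \<forall>y\<in>V. E x y \<longleftrightarrow> x \<noteq> y \<and> (x = c \<or> y = c)"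
  shows "cutv V E A = (if c \<in> A then int (card (V - A)) else int (card A))"
proof (cases "c \<in> A")
  case True
  have "cutv V E A = (\<Sum>a\<in>A. \<Sum>b\<in>V-A. (if a = c then 1 else 0))"
    unfolding cutv_def
    by (rule sum.cong[OF refl], rule sum.cong[OF refl]) (use ch AV True in \<open>auto simp: ei_def\<close>)
  also have "\<dots> = (\<Sum>a\<in>A. (if a = c then int (card (V - A)) else 0))"
    by (rule sum.cong) auto
  also have "\<dots> = int (card (V - A))"
    using True finite_subset[OF AV fV] by (simp add: sum.delta)
  finally show ?thesis using True by simp
next
  case False
  have fA: "finite A" using fV AV finite_subset by blast
  have "cutv V E A = (\<Sum>a\<in>A. \<Sum>b\<in>V-A. (if b = c then 1 else 0))"
    unfolding cutv_def
    by (rule sum.cong[OF refl], rule sum.cong[OF refl]) (use ch AV False in \<open>auto simp: ei_def\<close>)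
  also have "\<dots> = (\<Sum>a\<in>A. (1::int))"
    by (rule sum.cong) (use False cV fV in \<open>auto simp: sum.delta'\<close>)
  finally show ?thesis using False by simp
qed

lemma cut_costar:
  assumes fV: "finite V" and AV: "A \<subseteq> V" and cV: "c \<in> V"
    and ch: "\<forall>x\<in>V. \<forall>y\<in>V. E x y \<longleftrightarrow> x \<noteq> y \<and> x \<noteq> c \<and> y \<noteq> c"
  shows "cutv V E A = (if c \<in> A then (int (card A) - 1) * int (card (V - A))
                       else int (card A) * (int (card (V - A)) - 1))"
proof -
  have fA: "finite A" using fV AV finite_subset by blast
  have ch2: "\<forall>x\<in>V. \<forall>y\<in>V. E x y \<longleftrightarrow> \<not> (x \<noteq> y \<and> (x = c \<or> y = c)) \<and> x \<noteq> y" using ch by blast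
  define S where "S x y \<longleftrightarrow> x \<noteq> y \<and> (x = c \<or> y = c)" for x y
  have chS: "\<forall>x\<in>V. \<forall>y\<in>V. S x y \<longleftrightarrow> x \<noteq> y \<and> (x = c \<or> y = c)" unfolding S_def by simp
  have "cutv V E A = (\<Sum>a\<in>A. \<Sum>b\<in>V-A. (1 - ei S a b))"
    unfolding cutv_def
    by (rule sum.cong[OF refl], rule sum.cong[OF refl]) (use ch AV in \<open>auto simp: ei_def S_def\<close>)
  also have "\<dots> = int (card A) * int (card (V - A)) - cutv V S A"
    unfolding cutv_def by (simp add: sum_subtractf)
  finally show ?thesis using cut_star[OF fV AV cV chS] by (simp add: algebra_simps split: if_splits)
qed

lemma iso_any:
  assumes fV: "finite V" and cV: "card V = n"
    and ch: "\<And>f. bij_betw f V {0..<n} \<Longrightarrow> \<forall>x\<in>V. \<forall>y\<in>V. E x y \<longleftrightarrow> F (f x) (f y)"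
  shows "graph_iso V E {0..<n} F"
proof -
  obtain h where "bij_betw h V {0..<n}" using ex_bij_betw_finite_nat[OF fV] cV by blast
  then show ?thesis unfolding graph_iso_def using ch by blast
qed

lemma iso_centre:
  assumes fV: "finite V" and cV: "card V = n" and c: "c \<in> V"
    and ch: "\<And>f. bij_betw f V {0..<n} \<Longrightarrow> f c = 0 \<Longrightarrow> \<forall>x\<in>V. \<forall>y\<in>V. E x y \<longleftrightarrow> F (f x) (f y)"
  shows "graph_iso V E {0..<n} F"
proof -
  obtain h where h: "bij_betw h V {0..<n}" using ex_bij_betw_finite_nat[OF fV] cV by blast
  have hc: "h c \<in> {0..<n}" using h c bij_betwE by blast
  then have n0: "0 \<in> {0..<n}" by auto
  have t: "bij_betw (transpose 0 (h c)) {0..<n} {0..<n}"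
    by (rule bij_betw_transpose_iff) (use hc n0 in auto)
  have "bij_betw (transpose 0 (h c) \<circ> h) V {0..<n}" by (rule bij_betw_trans[OF h t])
  moreover have "(transpose 0 (h c) \<circ> h) c = 0" by simp
  ultimately show ?thesis unfolding graph_iso_def using ch by blast
qed

lemma bij_facts:
  assumes "bij_betw f V {0..<n}" "c \<in> V" "f c = 0" "x \<in> V" "y \<in> V"
  shows "(f x = f y \<longleftrightarrow> x = y)" "(f x = 0 \<longleftrightarrow> x = c)"
  using assms by (auto simp: bij_betw_def inj_on_def)


lemma from_iso_complete:
  assumes "graph_iso V E {0..<n} complete_adj"
  shows "\<forall>x\<in>V. \<forall>y\<in>V. E x y \<longleftrightarrow> x \<noteq> y"
proof -
  obtain f where f: "bij_betw f V {0..<n}" "\<forall>x\<in>V. \<forall>y\<in>V. E x y \<longleftrightarrow> complete_adj (f x) (f y)"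
    using assms unfolding graph_iso_def by blast
  have "inj_on f V" using f(1) bij_betw_imp_inj_on by blast
  then show ?thesis using f(2) unfolding complete_adj_def by (metis inj_on_eq_iff)
qed

lemma from_iso_empty:
  assumes sg: "simple_graph V E" and "graph_iso V E {0..<n} empty_adj"
  shows "\<forall>x y. \<not> E x y"
proof -
  obtain f where f: "\<forall>x\<in>V. \<forall>y\<in>V. E x y \<longleftrightarrow> empty_adj (f x) (f y)"
    using assms unfolding graph_iso_def by blast
  then show ?thesis using sg unfolding simple_graph_def empty_adj_def by blast
qed

lemma from_iso_centre:
  fixes F :: "nat \<Rightarrow> nat \<Rightarrow> bool" and n :: nat
  assumes "graph_iso V E {0..<n} F" and n0: "0 < n"
  obtains f c where "bij_betw f V {0..<n}" "c \<in> V" "f c = 0" "\<forall>x\<in>V. \<forall>y\<in>V. E x y \<longleftrightarrow> F (f x) (f y)"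
proof -
  obtain f where f: "bij_betw f V {0..<n}" "\<forall>x\<in>V. \<forall>y\<in>V. E x y \<longleftrightarrow> F (f x) (f y)"
    using assms unfolding graph_iso_def by blast
  have "0 \<in> f ` V" using f(1) n0 unfolding bij_betw_def by auto
  then obtain c where "c \<in> V" "f c = 0" by auto
  then show ?thesis using that f by blast
qed

lemma from_iso_star:
  assumes "graph_iso V E {0..<n} star_adj" and n0: "0 < n"
  shows "\<exists>c\<in>V. \<forall>x\<in>V. \<forall>y\<in>V. E x y \<longleftrightarrow> x \<noteq> y \<and> (x = c \<or> y = c)"
proof -
  obtain f c where f: "bij_betw f V {0..<n}" "c \<in> V" "f c = 0" "\<forall>x\<in>V. \<forall>y\<in>V. E x y \<longleftrightarrow> star_adj (f x) (f y)"
    using from_iso_centre[OF assms] by blast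
  have "\<forall>x\<in>V. \<forall>y\<in>V. E x y \<longleftrightarrow> x \<noteq> y \<and> (x = c \<or> y = c)"
  proof (intro ballI)
    fix x y assume xy: "x \<in> V" "y \<in> V"
    have "E x y \<longleftrightarrow> star_adj (f x) (f y)" using f(4) xy by blast
    also have "\<dots> \<longleftrightarrow> x \<noteq> y \<and> (x = c \<or> y = c)"
      unfolding star_adj_def using bij_facts[OF f(1-3) xy] bij_facts[OF f(1-3) xy(2,1)] by auto
    finally show "E x y \<longleftrightarrow> x \<noteq> y \<and> (x = c \<or> y = c)" .
  qed
  then show ?thesis using f(2) by blast
qed

lemma from_iso_costar:
  assumes "graph_iso V E {0..<n} costar_adj" and n0: "0 < n"
  shows "\<exists>c\<in>V. \<forall>x\<in>V. \<forall>y\<in>V. E x y \<longleftrightarrow> x \<noteq> y \<and> x \<noteq> c \<and> y \<noteq> c"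
proof -
  obtain f c where f: "bij_betw f V {0..<n}" "c \<in> V" "f c = 0" "\<forall>x\<in>V. \<forall>y\<in>V. E x y \<longleftrightarrow> costar_adj (f x) (f y)"
    using from_iso_centre[OF assms] by blast
  have "\<forall>x\<in>V. \<forall>y\<in>V. E x y \<longleftrightarrow> x \<noteq> y \<and> x \<noteq> c \<and> y \<noteq> c"
  proof (intro ballI)
    fix x y assume xy: "x \<in> V" "y \<in> V"
    have "E x y \<longleftrightarrow> costar_adj (f x) (f y)" using f(4) xy by blast
    also have "\<dots> \<longleftrightarrow> x \<noteq> y \<and> x \<noteq> c \<and> y \<noteq> c"
      unfolding costar_adj_def star_adj_def using bij_facts[OF f(1-3) xy] bij_facts[OF f(1-3) xy(2,1)] by auto
    finally show "E x y \<longleftrightarrow> x \<noteq> y \<and> x \<noteq> c \<and> y \<noteq> c" .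
  qed
  then show ?thesis using f(2) by blast
qed

lemma to_iso_complete:
  assumes fV: "finite V" and cV: "card V = n" and ch: "\<forall>x\<in>V. \<forall>y\<in>V. E x y \<longleftrightarrow> x \<noteq> y"
  shows "graph_iso V E {0..<n} complete_adj"
proof (rule iso_any[OF fV cV])
  fix f assume f: "bij_betw f V {0..<n}"
  have "inj_on f V" using f bij_betw_imp_inj_on by blast
  then show "\<forall>x\<in>V. \<forall>y\<in>V. E x y \<longleftrightarrow> complete_adj (f x) (f y)"
    using ch unfolding complete_adj_def by (metis inj_on_eq_iff)
qed

lemma to_iso_empty:
  assumes fV: "finite V" and cV: "card V = n" and ch: "\<forall>x y. \<not> E x y"
  shows "graph_iso V E {0..<n} empty_adj"
  by (rule iso_any[OF fV cV]) (use ch in \<open>simp add: empty_adj_def\<close>)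

lemma to_iso_star:
  assumes fV: "finite V" and cV: "card V = n" and c: "c \<in> V"
    and ch: "\<forall>x\<in>V. \<forall>y\<in>V. E x y \<longleftrightarrow> x \<noteq> y \<and> (x = c \<or> y = c)"
  shows "graph_iso V E {0..<n} star_adj"
proof (rule iso_centre[OF fV cV c])
  fix f assume f: "bij_betw f V {0..<n}" "f c = 0"
  show "\<forall>x\<in>V. \<forall>y\<in>V. E x y \<longleftrightarrow> star_adj (f x) (f y)"
  proof (intro ballI)
    fix x y assume xy: "x \<in> V" "y \<in> V"
    have "E x y \<longleftrightarrow> x \<noteq> y \<and> (x = c \<or> y = c)" using ch xy by blast
    also have "\<dots> \<longleftrightarrow> star_adj (f x) (f y)"
      unfolding star_adj_def using bij_facts[OF f(1) c f(2) xy] bij_facts[OF f(1) c f(2) xy(2,1)] by auto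
    finally show "E x y \<longleftrightarrow> star_adj (f x) (f y)" .
  qed
qed

lemma to_iso_costar:
  assumes fV: "finite V" and cV: "card V = n" and c: "c \<in> V"
    and ch: "\<forall>x\<in>V. \<forall>y\<in>V. E x y \<longleftrightarrow> x \<noteq> y \<and> x \<noteq> c \<and> y \<noteq> c"
  shows "graph_iso V E {0..<n} costar_adj"
proof (rule iso_centre[OF fV cV c])
  fix f assume f: "bij_betw f V {0..<n}" "f c = 0"
  show "\<forall>x\<in>V. \<forall>y\<in>V. E x y \<longleftrightarrow> costar_adj (f x) (f y)"
  proof (intro ballI)
    fix x y assume xy: "x \<in> V" "y \<in> V"
    have "E x y \<longleftrightarrow> x \<noteq> y \<and> x \<noteq> c \<and> y \<noteq> c" using ch xy by blast
    also have "\<dots> \<longleftrightarrow> costar_adj (f x) (f y)"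
      unfolding costar_adj_def star_adj_def using bij_facts[OF f(1) c f(2) xy] bij_facts[OF f(1) c f(2) xy(2,1)] by auto
    finally show "E x y \<longleftrightarrow> costar_adj (f x) (f y)" .
  qed
qed

theorem theorem1:
  fixes V :: "'a set" and E :: "'a \<Rightarrow> 'a \<Rightarrow> bool" and n k :: nat
  assumes "simple_graph V E" and "card V = n"
    and "2 \<le> k" and "k + 2 \<le> n"
  shows "regular (token_vertices V k) (token_adj E) \<longleftrightarrow>
    (graph_iso V E {0..<n} complete_adj
     \<or> graph_iso V E {0..<n} empty_adj
     \<or> (graph_iso V E {0..<n} star_adj \<and> 2 * k = n)
     \<or> (graph_iso V E {0..<n} costar_adj \<and> 2 * k = n))"
proof -
  note sg = assms(1) and cV = assms(2) and k2 = assms(3) and kn = assms(4)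
  have fV: "finite V" using sg by (simp add: simple_graph_def)
  have n0: "0 < n" using kn by simp
  have cD: "\<And>A. A \<subseteq> V \<Longrightarrow> card A = k \<Longrightarrow> card (V - A) = n - k"
    using fV cV by (simp add: card_Diff_subset finite_subset)
  show ?thesis unfolding regular_iff[OF sg]
  proof
    assume "\<exists>d. \<forall>A. A \<subseteq> V \<longrightarrow> card A = k \<longrightarrow> cutv V E A = d"
    then obtain d where const: "\<And>A. A \<subseteq> V \<Longrightarrow> card A = k \<Longrightarrow> cutv V E A = d" by blast
    show "graph_iso V E {0..<n} complete_adj
     \<or> graph_iso V E {0..<n} empty_adj
     \<or> (graph_iso V E {0..<n} star_adj \<and> 2 * k = n)
     \<or> (graph_iso V E {0..<n} costar_adj \<and> 2 * k = n)"
    proof (cases "2 * k = n")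
      case False
      have NA: "\<And>x y u. x \<in> V \<Longrightarrow> y \<in> V \<Longrightarrow> u \<in> V \<Longrightarrow> x \<noteq> y \<Longrightarrow> x \<noteq> u \<Longrightarrow> y \<noteq> u \<Longrightarrow> E x u = E y u"
      proof -
        fix x y u assume h: "x \<in> V" "y \<in> V" "u \<in> V" "x \<noteq> y" "x \<noteq> u" "y \<noteq> u"
        have "ei E x u = ei E y u" by (rule H2[where V=V and E=E and k=k and d=d, OF sg const cV k2 kn False h])
        then show "E x u = E y u" by (auto simp: ei_def split: if_splits)
      qed
      from compl_or_empty[OF sg NA] show ?thesis
      proof
        assume "\<forall>x\<in>V. \<forall>y\<in>V. E x y \<longleftrightarrow> x \<noteq> y"
        then have "graph_iso V E {0..<n} complete_adj" by (rule to_iso_complete[OF fV cV])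
        then show ?thesis by simp
      next
        assume "\<forall>x y. \<not> E x y"
        then have "graph_iso V E {0..<n} empty_adj" by (rule to_iso_empty[OF fV cV])
        then show ?thesis by simp
      qed
    next
      case True
      have HH: "\<And>x y u w. x \<in> V \<Longrightarrow> y \<in> V \<Longrightarrow> u \<in> V \<Longrightarrow> w \<in> V \<Longrightarrow> x \<noteq> y \<Longrightarrow> x \<noteq> u \<Longrightarrow> x \<noteq> w
       \<Longrightarrow> y \<noteq> u \<Longrightarrow> y \<noteq> w \<Longrightarrow> u \<noteq> w \<Longrightarrow> ei E x u - ei E y u = ei E x w - ei E y w"
        using H1[where V=V and E=E and k=k and d=d, OF sg const cV k2 kn] by blast
      show ?thesis
      proof (cases "\<forall>x\<in>V. \<forall>y\<in>V. \<forall>u\<in>V. x \<noteq> y \<longrightarrow> x \<noteq> u \<longrightarrow> y \<noteq> u \<longrightarrow> E x u = E y u")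
        case True
        then have NA: "\<And>x y u. x \<in> V \<Longrightarrow> y \<in> V \<Longrightarrow> u \<in> V \<Longrightarrow> x \<noteq> y \<Longrightarrow> x \<noteq> u \<Longrightarrow> y \<noteq> u \<Longrightarrow> E x u = E y u"
          by blast
        from compl_or_empty[OF sg NA] show ?thesis
        proof
          assume "\<forall>x\<in>V. \<forall>y\<in>V. E x y \<longleftrightarrow> x \<noteq> y"
          then have "graph_iso V E {0..<n} complete_adj" by (rule to_iso_complete[OF fV cV])
          then show ?thesis by simp
        next
          assume "\<forall>x y. \<not> E x y"
          then have "graph_iso V E {0..<n} empty_adj" by (rule to_iso_empty[OF fV cV])
          then show ?thesis by simp
        qed
      next
        case False
        then obtain x y u where V: "x \<in> V" "y \<in> V" "u \<in> V" and dist: "x \<noteq> y" "x \<noteq> u" "y \<noteq> u"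
          and ne: "E x u \<noteq> E y u" by blast
        have "\<exists>c\<in>V. (\<forall>a\<in>V. \<forall>b\<in>V. E a b \<longleftrightarrow> a \<noteq> b \<and> (a = c \<or> b = c))
          \<or> (\<forall>a\<in>V. \<forall>b\<in>V. E a b \<longleftrightarrow> a \<noteq> b \<and> a \<noteq> c \<and> b \<noteq> c)"
        proof (cases "E x u")
          case True
          then have "\<not> E y u" using ne by simp
          from star_or_costar[OF sg HH V dist True this] V show ?thesis by blast
        next
          case False
          then have "E y u" using ne by simp
          from star_or_costar[OF sg HH V(2,1,3) dist(1)[symmetric] dist(3,2) this False] V
          show ?thesis by blast
        qed
        then obtain c where c: "c \<in> V" and cc: "(\<forall>a\<in>V. \<forall>b\<in>V. E a b \<longleftrightarrow> a \<noteq> b \<and> (a = c \<or> b = c))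
          \<or> (\<forall>a\<in>V. \<forall>b\<in>V. E a b \<longleftrightarrow> a \<noteq> b \<and> a \<noteq> c \<and> b \<noteq> c)" by blast
        from cc show ?thesis
        proof
          assume "\<forall>a\<in>V. \<forall>b\<in>V. E a b \<longleftrightarrow> a \<noteq> b \<and> (a = c \<or> b = c)"
          then have "graph_iso V E {0..<n} star_adj" by (rule to_iso_star[OF fV cV c])
          then show ?thesis using \<open>2 * k = n\<close> by simp
        next
          assume "\<forall>a\<in>V. \<forall>b\<in>V. E a b \<longleftrightarrow> a \<noteq> b \<and> a \<noteq> c \<and> b \<noteq> c"
          then have "graph_iso V E {0..<n} costar_adj" by (rule to_iso_costar[OF fV cV c])
          then show ?thesis using \<open>2 * k = n\<close> by simp
        qed
      qed
    qed
  next
    assume H: "graph_iso V E {0..<n} complete_adj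
     \<or> graph_iso V E {0..<n} empty_adj
     \<or> (graph_iso V E {0..<n} star_adj \<and> 2 * k = n)
     \<or> (graph_iso V E {0..<n} costar_adj \<and> 2 * k = n)"
    show "\<exists>d. \<forall>A. A \<subseteq> V \<longrightarrow> card A = k \<longrightarrow> cutv V E A = d"
    proof -
      consider "graph_iso V E {0..<n} complete_adj" | "graph_iso V E {0..<n} empty_adj"
        | "graph_iso V E {0..<n} star_adj" "2 * k = n" | "graph_iso V E {0..<n} costar_adj" "2 * k = n"
        using H by blast
      then show ?thesis
      proof cases
        case 1
        have "\<forall>A. A \<subseteq> V \<longrightarrow> card A = k \<longrightarrow> cutv V E A = int k * int (n - k)"
          using cut_complete[OF fV _ from_iso_complete[OF 1]] cD by simp
        then show ?thesis by blast
      next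
        case 2
        then show ?thesis using cut_empty[OF from_iso_empty[OF sg 2]] by blast
      next
        case 3
        obtain c where c: "c \<in> V" "\<forall>x\<in>V. \<forall>y\<in>V. E x y \<longleftrightarrow> x \<noteq> y \<and> (x = c \<or> y = c)"
          using from_iso_star[OF 3(1) n0] by blast
        have "\<forall>A. A \<subseteq> V \<longrightarrow> card A = k \<longrightarrow> cutv V E A = int k"
          using cut_star[OF fV _ c] cD 3(2) by auto
        then show ?thesis by blast
      next
        case 4
        obtain c where c: "c \<in> V" "\<forall>x\<in>V. \<forall>y\<in>V. E x y \<longleftrightarrow> x \<noteq> y \<and> x \<noteq> c \<and> y \<noteq> c"
          using from_iso_costar[OF 4(1) n0] by blast
        have "\<forall>A. A \<subseteq> V \<longrightarrow> card A = k \<longrightarrow> cutv V E A = (int k - 1) * int k"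
          using cut_costar[OF fV _ c] cD 4(2) by (auto simp: algebra_simps)
        then show ?thesis by blast
      qed
    qed
  qed
qed

end
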